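(* Let $G=(V,E)$ with $V=\{v_1,\dots,v_n\}$ be an undirected graph in which every vertex has degree 2 or 3 and which has no cycles of length 3 or 4, and let $\alpha(G)$ be the maximum size of an independent set of $G$. Fix a total order $\pi$ on $V$. Call $v_i$ of type 1 if $\deg(v_i)=3$ and all its neighbors are before it or all are after it in $\pi$; type 2 if $\deg(v_i)=3$ otherwise; type 3 if $\deg(v_i)=2$ and both neighbors are before it or both are after it; type 4 if $\deg(v_i)=2$ otherwise. Construct the DAG $D=(S\uplus I,A)$: create a set $T\subseteq S$ of 4 vertices; for each $i$ create an internal vertex $u_i\in I$ and sets $I_i,O_i\subseteq S$ of 4 vertices each; add all arcs from $I_i$ to $\{u_i\}\cup T$ and all arcs from $u_i$ to $O_i\cup T$; add exactly $14,16,11,12$ arcs (arbitrary ones) from $I_i$ to $O_i$ when $v_i$ has type $1,2,3,4$ respectively; and for each edge $\{v_i,v_j\}\in E$ with $v_i$ before $v_j$ in $\pi$ add the arc $(u_i,u_j)$. Let $m'=|A|$. Then for every integer $k\ge0$, $G$ has an independent set of size at least $k$ if and only if there is an elimination sequence $\sigma$ of vertices of $I$ such that $D_\sigma$ has at most $m'-k$ arcs. Equivalently, the minimum number of arcs of $D_\sigma$ over all elimination sequences $\sigma$ equals $m'-\alpha(G)$.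
   Context: Eliminating a vertex $v$ of a DAG produces the DAG obtained by deleting $v$ and adding every arc $(x,y)$ with $x$ an in-neighbor and $y$ an out-neighbor of $v$ that is not already present. An elimination sequence is a sequence of distinct internal vertices (of any length), and $D_\sigma$ is the result of eliminating them in order. An independent set is a vertex set containing no edge of $G$. *)

theory Defs
  imports Main
begin

definition eliminate :: "('n \<times> 'n) set \<Rightarrow> 'n \<Rightarrow> ('n \<times> 'n) set" where
  "eliminate A v = {(x, y). (x, y) \<in> A \<and> x \<noteq> v \<and> y \<noteq> v}
                   \<union> {(x, y). (x, v) \<in> A \<and> (v, y) \<in> A}"

definition eliminate_seq :: "('n \<times> 'n) set \<Rightarrow> 'n list \<Rightarrow> ('n \<times> 'n) set" where
  "eliminate_seq A \<sigma> = fold (\<lambda>v B. eliminate B v) \<sigma> A"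

definition elimination_sequence :: "'n set \<Rightarrow> 'n list \<Rightarrow> bool" where
  "elimination_sequence I \<sigma> \<longleftrightarrow> distinct \<sigma> \<and> set \<sigma> \<subseteq> I"

definition ugraph :: "'v set \<Rightarrow> ('v \<Rightarrow> 'v \<Rightarrow> bool) \<Rightarrow> bool" where
  "ugraph V E \<longleftrightarrow> finite V \<and> (\<forall>x y. E x y \<longrightarrow> x \<in> V \<and> y \<in> V \<and> x \<noteq> y \<and> E y x)"

definition nbrs :: "'v set \<Rightarrow> ('v \<Rightarrow> 'v \<Rightarrow> bool) \<Rightarrow> 'v \<Rightarrow> 'v set" where
  "nbrs V E v = {w \<in> V. E v w}"

definition deg :: "'v set \<Rightarrow> ('v \<Rightarrow> 'v \<Rightarrow> bool) \<Rightarrow> 'v \<Rightarrow> nat" where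
  "deg V E v = card (nbrs V E v)"

definition no_C3_C4 :: "'v set \<Rightarrow> ('v \<Rightarrow> 'v \<Rightarrow> bool) \<Rightarrow> bool" where
  "no_C3_C4 V E \<longleftrightarrow>
     (\<nexists>a b c. a \<in> V \<and> b \<in> V \<and> c \<in> V \<and> E a b \<and> E b c \<and> E c a) \<and>
     (\<nexists>a b c d. a \<in> V \<and> b \<in> V \<and> c \<in> V \<and> d \<in> V \<and> distinct [a, b, c, d] \<and>
                E a b \<and> E b c \<and> E c d \<and> E d a)"

definition independent_set :: "'v set \<Rightarrow> ('v \<Rightarrow> 'v \<Rightarrow> bool) \<Rightarrow> 'v set \<Rightarrow> bool" where
  "independent_set V E S \<longleftrightarrow> S \<subseteq> V \<and> (\<forall>x\<in>S. \<forall>y\<in>S. \<not> E x y)"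

definition independence_number :: "'v set \<Rightarrow> ('v \<Rightarrow> 'v \<Rightarrow> bool) \<Rightarrow> nat" where
  "independence_number V E = Max {card S | S. independent_set V E S}"

text \<open>The total order \<pi> on V is given by a list vs enumerating V without repetitions;
x is before y iff x occurs earlier in vs.\<close>

definition before :: "'v list \<Rightarrow> 'v \<Rightarrow> 'v \<Rightarrow> bool" where
  "before vs x y \<longleftrightarrow> (\<exists>i j. i < j \<and> j < length vs \<and> vs ! i = x \<and> vs ! j = y)"

definition one_sided :: "'v list \<Rightarrow> ('v \<Rightarrow> 'v \<Rightarrow> bool) \<Rightarrow> 'v \<Rightarrow> bool" where
  "one_sided vs E v \<longleftrightarrow>
     (\<forall>w \<in> nbrs (set vs) E v. before vs w v) \<or> (\<forall>w \<in> nbrs (set vs) E v. before vs v w)"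

definition vtype :: "'v list \<Rightarrow> ('v \<Rightarrow> 'v \<Rightarrow> bool) \<Rightarrow> 'v \<Rightarrow> nat" where
  "vtype vs E v =
     (if deg (set vs) E v = 3 then (if one_sided vs E v then 1 else 2)
      else (if one_sided vs E v then 3 else 4))"

definition gadget_arcs :: "'v list \<Rightarrow> ('v \<Rightarrow> 'v \<Rightarrow> bool) \<Rightarrow> 'v \<Rightarrow> nat" where
  "gadget_arcs vs E v =
     (case vtype vs E v of Suc 0 \<Rightarrow> 14 | Suc (Suc 0) \<Rightarrow> 16 | Suc (Suc (Suc 0)) \<Rightarrow> 11 | _ \<Rightarrow> 12)"

datatype 'v dnode = Tn nat | Uv 'v | Inn 'v nat | Outn 'v nat

text \<open>T = {Tn 0..Tn 3}; u_i = Uv v; I_i = {Inn v 0..Inn v 3}; O_i = {Outn v 0..Outn v 3}.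
X v \<subseteq> {0..3} \<times> {0..3} selects which arcs (Inn v a, Outn v b) are added.\<close>

definition internal :: "'v list \<Rightarrow> 'v dnode set" where
  "internal vs = Uv ` set vs"

definition dag_arcs ::
  "'v list \<Rightarrow> ('v \<Rightarrow> 'v \<Rightarrow> bool) \<Rightarrow> ('v \<Rightarrow> (nat \<times> nat) set) \<Rightarrow> ('v dnode \<times> 'v dnode) set" where
  "dag_arcs vs E X =
     {(Inn v j, Uv v) | v j. v \<in> set vs \<and> j < 4}
   \<union> {(Inn v j, Tn t) | v j t. v \<in> set vs \<and> j < 4 \<and> t < 4}
   \<union> {(Uv v, Outn v j) | v j. v \<in> set vs \<and> j < 4}
   \<union> {(Uv v, Tn t) | v t. v \<in> set vs \<and> t < 4}
   \<union> {(Inn v a, Outn v b) | v a b. v \<in> set vs \<and> (a, b) \<in> X v}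
   \<union> {(Uv v, Uv w) | v w. v \<in> set vs \<and> w \<in> set vs \<and> E v w \<and> before vs v w}"

end

theory Submission
  imports Defs
begin


definition acyc :: "('n \<times> 'n) set \<Rightarrow> bool" where
  "acyc A \<longleftrightarrow> (\<forall>x. (x, x) \<notin> A\<^sup>+)"

lemma eliminate_sub_trancl: "eliminate A v \<subseteq> A\<^sup>+"
  unfolding eliminate_def by (auto intro: trancl_into_trancl)

lemma acyc_eliminate: "acyc A \<Longrightarrow> acyc (eliminate A v)"
proof -
  assume a: "acyc A"
  have "(eliminate A v)\<^sup>+ \<subseteq> (A\<^sup>+)\<^sup>+" using trancl_mono[OF _ eliminate_sub_trancl[of A v]] by auto
  then have "(eliminate A v)\<^sup>+ \<subseteq> A\<^sup>+" by simp
  then show ?thesis using a unfolding acyc_def by blast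
qed

lemma acyc_noloop: "acyc A \<Longrightarrow> (x, x) \<notin> A"
  unfolding acyc_def by blast

lemma walk_filter:
  assumes "\<forall>x. (x, x) \<notin> A"
  shows "successively (\<lambda>a b. (a, b) \<in> A) ws \<Longrightarrow> ws \<noteq> [] \<Longrightarrow> hd ws \<noteq> v \<Longrightarrow> last ws \<noteq> v \<Longrightarrow>
    successively (\<lambda>a b. (a, b) \<in> eliminate A v) (filter (\<lambda>x. x \<noteq> v) ws)"
proof (induction ws rule: induct_list012)
  case 1 then show ?case by simp
next
  case (2 x) then show ?case by simp
next
  case (3 x y zs)
  show ?case
  proof (cases "y = v")
    case False
    have "successively (\<lambda>a b. (a, b) \<in> eliminate A v) (filter (\<lambda>x. x \<noteq> v) (y # zs))"
      using 3 False by auto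
    moreover have "(x, y) \<in> eliminate A v" using 3 False unfolding eliminate_def by auto
    ultimately show ?thesis using 3 False by auto
  next
    case True
    then obtain z zs' where zs: "zs = z # zs'" using 3 by (cases zs) auto
    have vz: "(v, z) \<in> A" using 3 True zs by auto
    then have "z \<noteq> v" using assms by auto
    have "successively (\<lambda>a b. (a, b) \<in> eliminate A v) (filter (\<lambda>x. x \<noteq> v) zs)"
      using 3 True zs \<open>z \<noteq> v\<close> by auto
    moreover have "(x, z) \<in> eliminate A v" using 3 True vz unfolding eliminate_def by auto
    ultimately show ?thesis using 3 True zs \<open>z \<noteq> v\<close> by auto
  qed
qed

lemma eliminate_seq_Cons: "eliminate_seq A (v # \<sigma>) = eliminate_seq (eliminate A v) \<sigma>"
  unfolding eliminate_seq_def by simp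

lemma eliminate_seq_Nil: "eliminate_seq A [] = A"
  unfolding eliminate_seq_def by simp

lemma path_elim:
  "acyc A \<Longrightarrow> distinct \<sigma> \<Longrightarrow> successively (\<lambda>a b. (a, b) \<in> A) (x # zs @ [y]) \<Longrightarrow>
   set zs \<subseteq> set \<sigma> \<Longrightarrow> x \<notin> set \<sigma> \<Longrightarrow> y \<notin> set \<sigma> \<Longrightarrow> (x, y) \<in> eliminate_seq A \<sigma>"
proof (induction \<sigma> arbitrary: A zs)
  case Nil
  then show ?case by (simp add: eliminate_seq_Nil)
next
  case (Cons v \<sigma>)
  let ?zs = "filter (\<lambda>x. x \<noteq> v) zs"
  have nl: "\<forall>x. (x, x) \<notin> A" using Cons.prems(1) acyc_noloop by metis
  have w0: "successively (\<lambda>a b. (a, b) \<in> eliminate A v) (filter (\<lambda>x. x \<noteq> v) (x # zs @ [y]))"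
    by (rule walk_filter[OF nl]) (use Cons.prems in auto)
  have eq: "filter (\<lambda>x. x \<noteq> v) (x # zs @ [y]) = x # ?zs @ [y]" using Cons.prems by auto
  have w: "successively (\<lambda>a b. (a, b) \<in> eliminate A v) (x # ?zs @ [y])" using w0 unfolding eq .
  have "(x, y) \<in> eliminate_seq (eliminate A v) \<sigma>"
    apply (rule Cons.IH[OF acyc_eliminate[OF Cons.prems(1)] _ w])
    using Cons.prems by auto
  then show ?case by (simp add: eliminate_seq_Cons)
qed

lemma survive: "acyc A \<Longrightarrow> distinct \<sigma> \<Longrightarrow> (x, y) \<in> A \<Longrightarrow> x \<notin> set \<sigma> \<Longrightarrow> y \<notin> set \<sigma> \<Longrightarrow>
  (x, y) \<in> eliminate_seq A \<sigma>"
  using path_elim[of A \<sigma> x "[]" y] by auto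

lemma path2: "acyc A \<Longrightarrow> distinct \<sigma> \<Longrightarrow> (x, a) \<in> A \<Longrightarrow> (a, y) \<in> A \<Longrightarrow> a \<in> set \<sigma> \<Longrightarrow>
  x \<notin> set \<sigma> \<Longrightarrow> y \<notin> set \<sigma> \<Longrightarrow> (x, y) \<in> eliminate_seq A \<sigma>"
  using path_elim[of A \<sigma> x "[a]" y] by auto

lemma path3: "acyc A \<Longrightarrow> distinct \<sigma> \<Longrightarrow> (x, a) \<in> A \<Longrightarrow> (a, b) \<in> A \<Longrightarrow> (b, y) \<in> A \<Longrightarrow>
  a \<in> set \<sigma> \<Longrightarrow> b \<in> set \<sigma> \<Longrightarrow>
  x \<notin> set \<sigma> \<Longrightarrow> y \<notin> set \<sigma> \<Longrightarrow> (x, y) \<in> eliminate_seq A \<sigma>"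
  using path_elim[of A \<sigma> x "[a, b]" y] by auto

definition indep_arcs :: "('n \<times> 'n) set \<Rightarrow> 'n set \<Rightarrow> bool" where
  "indep_arcs A S \<longleftrightarrow> (\<forall>a b. (a, b) \<in> A \<longrightarrow> \<not> (a \<in> S \<and> b \<in> S))"

definition E2 :: "('n \<times> 'n) set \<Rightarrow> 'n set \<Rightarrow> ('n \<times> 'n) set" where
  "E2 A S = {(x, y). (x, y) \<in> A \<and> x \<notin> S \<and> y \<notin> S} \<union> {(x, y). \<exists>v\<in>S. (x, v) \<in> A \<and> (v, y) \<in> A}"

lemma elim_indep:
  "distinct \<sigma> \<Longrightarrow> indep_arcs A (set \<sigma>) \<Longrightarrow> eliminate_seq A \<sigma> \<subseteq> E2 A (set \<sigma>)"
proof (induction \<sigma> arbitrary: A)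
  case Nil
  then show ?case by (auto simp: eliminate_seq_Nil E2_def)
next
  case (Cons v \<sigma>)
  have "indep_arcs (eliminate A v) (set \<sigma>)"
    using Cons.prems unfolding indep_arcs_def eliminate_def by auto
  then have "eliminate_seq (eliminate A v) \<sigma> \<subseteq> E2 (eliminate A v) (set \<sigma>)"
    using Cons by auto
  also have "\<dots> \<subseteq> E2 A (set (v # \<sigma>))"
    using Cons.prems unfolding E2_def eliminate_def indep_arcs_def by auto
  finally show ?case by (simp add: eliminate_seq_Cons)
qed

lemma elim_sub_nodes: "A \<subseteq> N \<times> N \<Longrightarrow> eliminate_seq A \<sigma> \<subseteq> N \<times> N"
proof (induction \<sigma> arbitrary: A)
  case Nil then show ?case by (simp add: eliminate_seq_Nil)
next
  case (Cons v \<sigma>)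
  have "eliminate A v \<subseteq> N \<times> N" using Cons.prems unfolding eliminate_def by auto
  then show ?case using Cons.IH by (simp add: eliminate_seq_Cons)
qed




locale G =
  fixes vs :: "'v list" and E :: "'v \<Rightarrow> 'v \<Rightarrow> bool" and X :: "'v \<Rightarrow> (nat \<times> nat) set"
  assumes dist: "distinct vs"
    and ug: "ugraph (set vs) E"
    and degs: "\<forall>v \<in> set vs. deg (set vs) E v = 2 \<or> deg (set vs) E v = 3"
    and noc: "no_C3_C4 (set vs) E"
    and Xa: "\<forall>v \<in> set vs. X v \<subseteq> {0..<4} \<times> {0..<4} \<and> card (X v) = gadget_arcs vs E v"
begin

abbreviation "V \<equiv> set vs"
abbreviation "Arcs \<equiv> dag_arcs vs E X"

lemma Esym: "E x y \<Longrightarrow> E y x" using ug unfolding ugraph_def by blast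
lemma EV: "E x y \<Longrightarrow> x \<in> V \<and> y \<in> V" using ug unfolding ugraph_def by blast
lemma Eirr: "\<not> E x x" using ug unfolding ugraph_def by blast
lemma finV: "finite V" by simp

definition idx :: "'v \<Rightarrow> nat" where "idx v = (THE i. i < length vs \<and> vs ! i = v)"

lemma idx_nth: "i < length vs \<Longrightarrow> idx (vs ! i) = i"
  unfolding idx_def
  by (rule the_equality) (use dist nth_eq_iff_index_eq in auto)

lemma before_idx: "before vs x y \<Longrightarrow> idx x < idx y \<and> idx y < length vs \<and> x \<in> V \<and> y \<in> V"
  unfolding before_def using idx_nth by auto

lemma before_irr: "\<not> before vs x x" using before_idx by fastforce
lemma before_asym: "before vs x y \<Longrightarrow> \<not> before vs y x" using before_idx[of x y] before_idx[of y x] by auto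
lemma before_total: "x \<in> V \<Longrightarrow> y \<in> V \<Longrightarrow> x \<noteq> y \<Longrightarrow> before vs x y \<or> before vs y x"
proof -
  assume "x \<in> V" "y \<in> V" "x \<noteq> y"
  then obtain i j where ij: "i < length vs" "vs ! i = x" "j < length vs" "vs ! j = y"
    by (auto simp: in_set_conv_nth)
  then have "i \<noteq> j" using \<open>x \<noteq> y\<close> by auto
  then show ?thesis unfolding before_def using ij
    by (cases "i < j") (auto, metis linorder_neqE_nat)
qed

lemma Xv: "v \<in> V \<Longrightarrow> X v \<subseteq> {0..<4} \<times> {0..<4}" using Xa by blast
lemma cX: "v \<in> V \<Longrightarrow> card (X v) = gadget_arcs vs E v" using Xa by blast

lemma A_Inn_Uv[simp]: "(Inn v j, Uv w) \<in> Arcs \<longleftrightarrow> w = v \<and> v \<in> V \<and> j < 4"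
  unfolding dag_arcs_def by auto
lemma A_Inn_Tn[simp]: "(Inn v j, Tn t) \<in> Arcs \<longleftrightarrow> v \<in> V \<and> j < 4 \<and> t < 4"
  unfolding dag_arcs_def by auto
lemma A_Inn_Outn[simp]: "(Inn v a, Outn w b) \<in> Arcs \<longleftrightarrow> w = v \<and> v \<in> V \<and> (a, b) \<in> X v"
  unfolding dag_arcs_def by auto
lemma A_Inn_Inn[simp]: "(Inn v a, Inn w b) \<notin> Arcs"
  unfolding dag_arcs_def by auto
lemma A_Uv_Outn[simp]: "(Uv v, Outn w j) \<in> Arcs \<longleftrightarrow> w = v \<and> v \<in> V \<and> j < 4"
  unfolding dag_arcs_def by auto
lemma A_Uv_Tn[simp]: "(Uv v, Tn t) \<in> Arcs \<longleftrightarrow> v \<in> V \<and> t < 4"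
  unfolding dag_arcs_def by auto
lemma A_Uv_Uv[simp]: "(Uv v, Uv w) \<in> Arcs \<longleftrightarrow> v \<in> V \<and> w \<in> V \<and> E v w \<and> before vs v w"
  unfolding dag_arcs_def by auto
lemma A_Uv_Inn[simp]: "(Uv v, Inn w j) \<notin> Arcs"
  unfolding dag_arcs_def by auto
lemma A_Tn[simp]: "(Tn t, y) \<notin> Arcs"
  unfolding dag_arcs_def by auto
lemma A_Outn[simp]: "(Outn v j, y) \<notin> Arcs"
  unfolding dag_arcs_def by auto
lemma A_to_Inn[simp]: "(x, Inn v j) \<notin> Arcs"
  unfolding dag_arcs_def by auto

fun rk :: "'v dnode \<Rightarrow> nat" where
  "rk (Inn v j) = 0"
| "rk (Uv v) = Suc (idx v)"
| "rk (Outn v j) = Suc (Suc (length vs))"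
| "rk (Tn t) = Suc (Suc (length vs))"

lemma idx_lt: "v \<in> V \<Longrightarrow> idx v < length vs"
  by (metis idx_nth in_set_conv_nth)

lemma rk_arc: "(a, b) \<in> Arcs \<Longrightarrow> rk a < rk b"
  by (cases a; cases b) (auto dest: before_idx idx_lt)

lemma acycA: "acyc Arcs"
proof -
  have "(a, b) \<in> Arcs\<^sup>+ \<Longrightarrow> rk a < rk b" for a b
    by (induction rule: trancl_induct) (auto dest: rk_arc)
  then show ?thesis unfolding acyc_def by blast
qed

definition Nodes :: "'v dnode set" where
  "Nodes = Tn ` {..<4} \<union> Uv ` V \<union> (\<lambda>(v, j). Inn v j) ` (V \<times> {..<4}) \<union> (\<lambda>(v, j). Outn v j) ` (V \<times> {..<4})"

lemma Nodes_Inn[simp]: "Inn v j \<in> Nodes \<longleftrightarrow> v \<in> V \<and> j < 4" unfolding Nodes_def by force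
lemma Nodes_Outn[simp]: "Outn v j \<in> Nodes \<longleftrightarrow> v \<in> V \<and> j < 4" unfolding Nodes_def by force
lemma Nodes_Uv[simp]: "Uv v \<in> Nodes \<longleftrightarrow> v \<in> V" unfolding Nodes_def by force
lemma Nodes_Tn[simp]: "Tn t \<in> Nodes \<longleftrightarrow> t < 4" unfolding Nodes_def by force
lemma Xlt: "v \<in> V \<Longrightarrow> (a, b) \<in> X v \<Longrightarrow> a < 4 \<and> b < 4" using Xv by fastforce

lemma finNodes: "finite Nodes" unfolding Nodes_def by auto

lemma A_Nodes: "Arcs \<subseteq> Nodes \<times> Nodes"
proof
  fix p assume "p \<in> Arcs"
  then obtain a b where p: "p = (a, b)" "(a, b) \<in> Arcs" by (cases p) auto
  show "p \<in> Nodes \<times> Nodes"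
    using p(2) Xlt unfolding p(1)
    by (cases a; cases b) (auto dest: before_idx)
qed

lemma finA: "finite Arcs" using A_Nodes finNodes by (meson finite_SigmaI finite_subset)

lemma fin_elim: "finite (eliminate_seq Arcs \<sigma>)"
  using elim_sub_nodes[OF A_Nodes] finNodes by (meson finite_SigmaI finite_subset)

end


context G begin

definition P :: "'v \<Rightarrow> 'v set" where "P v = {w \<in> V. E v w \<and> before vs w v}"
definition Q :: "'v \<Rightarrow> 'v set" where "Q v = {w \<in> V. E v w \<and> before vs v w}"

lemma finP[simp]: "finite (P v)" unfolding P_def by simp
lemma finQ[simp]: "finite (Q v)" unfolding Q_def by simp
lemma PQ_disj: "P v \<inter> Q v = {}" unfolding P_def Q_def using before_asym by auto
lemma P_ne: "w \<in> P v \<Longrightarrow> w \<noteq> v" unfolding P_def using Eirr by auto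
lemma Q_ne: "w \<in> Q v \<Longrightarrow> w \<noteq> v" unfolding Q_def using Eirr by auto

lemma nbrs_PQ: "v \<in> V \<Longrightarrow> nbrs V E v = P v \<union> Q v"
  unfolding nbrs_def P_def Q_def using before_total Eirr by fastforce

lemma deg_PQ: "v \<in> V \<Longrightarrow> deg V E v = card (P v) + card (Q v)"
  unfolding deg_def using nbrs_PQ PQ_disj by (simp add: card_Un_disjoint)

lemma one_sided_PQ: "v \<in> V \<Longrightarrow> one_sided vs E v \<longleftrightarrow> (P v = {} \<or> Q v = {})"
  unfolding one_sided_def using nbrs_PQ[of v] PQ_disj[of v]
  unfolding P_def Q_def by (auto dest: before_asym)

lemma cform: assumes "v \<in> V"
  shows "card (X v) = 5 + 3 * (card (P v) + card (Q v)) + card (P v) * card (Q v)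
     \<and> (card (P v) + card (Q v) = 2 \<or> card (P v) + card (Q v) = 3)"
proof -
  define p where "p = card (P v)"
  define q where "q = card (Q v)"
  have d: "deg V E v = p + q" using deg_PQ assms p_def q_def by simp
  have os: "one_sided vs E v \<longleftrightarrow> p = 0 \<or> q = 0" using one_sided_PQ[OF assms] p_def q_def by simp
  have d23: "p + q = 2 \<or> p + q = 3" using degs assms d by auto
  have c: "card (X v) = gadget_arcs vs E v" using cX assms .
  have "card (X v) = 5 + 3 * (p + q) + p * q"
  proof (cases "p + q = 3")
    case True
    show ?thesis
    proof (cases "p = 0 \<or> q = 0")
      case True
      then show ?thesis using c \<open>p + q = 3\<close> d os unfolding gadget_arcs_def vtype_def by auto
    next
      case False
      then have "p = 1 \<or> p = 2" using \<open>p + q = 3\<close> by auto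
      then have "p * q = 2" using \<open>p + q = 3\<close> by auto
      then show ?thesis using c \<open>p + q = 3\<close> d os False unfolding gadget_arcs_def vtype_def by auto
    qed
  next
    case False
    then have "p + q = 2" using d23 by auto
    show ?thesis
    proof (cases "p = 0 \<or> q = 0")
      case True
      then show ?thesis using c \<open>p + q = 2\<close> d os unfolding gadget_arcs_def vtype_def by auto
    next
      case False
      then have "p = 1" "q = 1" using \<open>p + q = 2\<close> by auto
      then show ?thesis using c \<open>p + q = 2\<close> d os False unfolding gadget_arcs_def vtype_def by auto
    qed
  qed
  then show ?thesis using d23 p_def q_def by simp
qed

lemma pq_le2: "v \<in> V \<Longrightarrow> card (P v) * card (Q v) \<le> 2"
proof -
  assume v: "v \<in> V"
  define p where "p = card (P v)"
  define q where "q = card (Q v)"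
  have "p + q = 2 \<or> p + q = 3" using cform[OF v] p_def q_def by simp
  then have "p \<le> 3" "q = 3 - p \<or> q = 2 - p" by auto
  then have "p = 0 \<or> p = 1 \<or> p = 2 \<or> p = 3" by auto
  then have "p * q \<le> 2" using \<open>q = 3 - p \<or> q = 2 - p\<close> by auto
  then show ?thesis using p_def q_def by simp
qed

lemma in_Uv: "(x, Uv v) \<in> Arcs \<longleftrightarrow> v \<in> V \<and> ((\<exists>j<4. x = Inn v j) \<or> (\<exists>w\<in>P v. x = Uv w))"
  by (cases x) (auto simp: P_def dest: Esym before_idx)

lemma out_Uv: "(Uv v, y) \<in> Arcs \<longleftrightarrow> v \<in> V \<and> ((\<exists>j<4. y = Outn v j) \<or> (\<exists>t<4. y = Tn t) \<or> (\<exists>w\<in>Q v. y = Uv w))"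
  by (cases y) (auto simp: Q_def dest: Esym before_idx)

end


context G begin

definition Iso :: "'v set \<Rightarrow> 'v set" where
  "Iso U = {v \<in> U. P v \<inter> U = {} \<and> Q v \<inter> U = {}}"

definition Lost :: "'v set \<Rightarrow> 'v \<Rightarrow> ('v dnode \<times> 'v dnode) set" where
  "Lost U v = (\<lambda>j. (Inn v j, Uv v)) ` {..<4} \<union> (\<lambda>j. (Uv v, Outn v j)) ` {..<4}
     \<union> (\<lambda>t. (Uv v, Tn t)) ` {..<4} \<union> (\<lambda>w. (Uv w, Uv v)) ` P v \<union> (\<lambda>w. (Uv v, Uv w)) ` (Q v - U)"

definition G1s :: "'v \<Rightarrow> ('v dnode \<times> 'v dnode) set" where
  "G1s v = (\<lambda>(a, b). (Inn v a, Outn v b)) ` (({..<4} \<times> {..<4}) - X v)"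
definition G3s :: "'v set \<Rightarrow> 'v \<Rightarrow> ('v dnode \<times> 'v dnode) set" where
  "G3s U v = (\<lambda>(w, a, b). (Inn v a, Outn w b)) ` ((Q v \<inter> U) \<times> {..<4} \<times> {..<4})"
definition G5s :: "'v set \<Rightarrow> 'v \<Rightarrow> ('v dnode \<times> 'v dnode) set" where
  "G5s U v = (\<lambda>(w, j). (Inn v j, Uv w)) ` ((Q v - U) \<times> {..<4})"
definition G7s :: "'v set \<Rightarrow> 'v \<Rightarrow> ('v dnode \<times> 'v dnode) set" where
  "G7s U v = (\<lambda>(w, j). (Uv w, Outn v j)) ` ((P v - U) \<times> {..<4})"
definition G10s :: "'v set \<Rightarrow> 'v \<Rightarrow> ('v dnode \<times> 'v dnode) set" where
  "G10s U v = (if v \<in> Iso U then (\<lambda>(a, b). (Uv a, Uv b)) ` (P v \<times> Q v) else {})"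

definition Gain :: "'v set \<Rightarrow> 'v \<Rightarrow> ('v dnode \<times> 'v dnode) set" where
  "Gain U v = G1s v \<union> G3s U v \<union> G5s U v \<union> G7s U v \<union> G10s U v"

lemma card_Lost: "card (Lost U v) = 12 + card (P v) + card (Q v - U)"
proof -
  have i1: "card ((\<lambda>j. (Inn v j, Uv v)) ` {..<4::nat}) = 4" by (subst card_image) (auto simp: inj_on_def)
  have i2: "card ((\<lambda>j. (Uv v, Outn v j)) ` {..<4::nat}) = 4" by (subst card_image) (auto simp: inj_on_def)
  have i3: "card ((\<lambda>t. (Uv v, Tn t)) ` {..<4::nat}) = 4" by (subst card_image) (auto simp: inj_on_def)
  have i4: "card ((\<lambda>w. (Uv w, Uv v)) ` P v) = card (P v)" by (subst card_image) (auto simp: inj_on_def)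
  have i5: "card ((\<lambda>w. (Uv v, Uv w)) ` (Q v - U)) = card (Q v - U)" by (subst card_image) (auto simp: inj_on_def)
  have d4: "((\<lambda>w. (Uv w, Uv v)) ` P v) \<inter> ((\<lambda>w. (Uv v, Uv w)) ` (Q v - U)) = {}"
    using P_ne by auto
  have d1: "(\<lambda>j. (Inn v j, Uv v)) ` {..<4::nat} \<inter> (\<lambda>j. (Uv v, Outn v j)) ` {..<4} = {}" by auto
  have d2: "((\<lambda>j. (Inn v j, Uv v)) ` {..<4::nat} \<union> (\<lambda>j. (Uv v, Outn v j)) ` {..<4}) \<inter> (\<lambda>t. (Uv v, Tn t)) ` {..<4} = {}" by auto
  have d3: "((\<lambda>j. (Inn v j, Uv v)) ` {..<4::nat} \<union> (\<lambda>j. (Uv v, Outn v j)) ` {..<4} \<union> (\<lambda>t. (Uv v, Tn t)) ` {..<4}) \<inter> (\<lambda>w. (Uv w, Uv v)) ` P v = {}" by auto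
  have d5: "((\<lambda>j. (Inn v j, Uv v)) ` {..<4::nat} \<union> (\<lambda>j. (Uv v, Outn v j)) ` {..<4} \<union> (\<lambda>t. (Uv v, Tn t)) ` {..<4} \<union> (\<lambda>w. (Uv w, Uv v)) ` P v) \<inter> (\<lambda>w. (Uv v, Uv w)) ` (Q v - U) = {}"
    using d4 by auto
  show ?thesis unfolding Lost_def
    using i1 i2 i3 i4 i5 d1 d2 d3 d5 by (simp add: card_Un_disjoint)
qed

lemma card_G1: "v \<in> V \<Longrightarrow> card (G1s v) = 16 - card (X v)"
proof -
  assume v: "v \<in> V"
  have "card (G1s v) = card (({..<4::nat} \<times> {..<4::nat}) - X v)"
    unfolding G1s_def by (subst card_image) (auto simp: inj_on_def)
  also have "\<dots> = 16 - card (X v)"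
    using Xv[OF v] by (subst card_Diff_subset) (auto intro: finite_subset simp: atLeast0LessThan)
  finally show ?thesis .
qed

lemma card_G3: "card (G3s U v) = 16 * card (Q v \<inter> U)"
  unfolding G3s_def by (subst card_image) (auto simp: inj_on_def card_cartesian_product)
lemma card_G5: "card (G5s U v) = 4 * card (Q v - U)"
  unfolding G5s_def by (subst card_image) (auto simp: inj_on_def card_cartesian_product)
lemma card_G7: "card (G7s U v) = 4 * card (P v - U)"
  unfolding G7s_def by (subst card_image) (auto simp: inj_on_def card_cartesian_product)
lemma card_G10: "card (G10s U v) = (if v \<in> Iso U then card (P v) * card (Q v) else 0)"
  unfolding G10s_def by (cases "v \<in> Iso U") (simp_all add: card_image inj_on_def card_cartesian_product)

lemma fin_G: "finite (G1s v)" "finite (G3s U v)" "finite (G5s U v)" "finite (G7s U v)" "finite (G10s U v)"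
  unfolding G1s_def G3s_def G5s_def G7s_def G10s_def by auto

lemma finGain: "finite (Gain U v)" unfolding Gain_def using fin_G by auto
lemma finLost: "finite (Lost U v)" unfolding Lost_def by auto

lemma card_Gain: assumes "v \<in> V"
  shows "card (Gain U v) = (16 - card (X v)) + 16 * card (Q v \<inter> U) + 4 * card (Q v - U)
     + 4 * card (P v - U) + (if v \<in> Iso U then card (P v) * card (Q v) else 0)"
proof -
  have a: "G1s v \<inter> G3s U v = {}" unfolding G1s_def G3s_def using Q_ne by auto
  have b: "(G1s v \<union> G3s U v) \<inter> G5s U v = {}" unfolding G1s_def G3s_def G5s_def by auto
  have c: "(G1s v \<union> G3s U v \<union> G5s U v) \<inter> G7s U v = {}" unfolding G1s_def G3s_def G5s_def G7s_def by auto
  have d: "(G1s v \<union> G3s U v \<union> G5s U v \<union> G7s U v) \<inter> G10s U v = {}"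
    unfolding G1s_def G3s_def G5s_def G7s_def G10s_def by auto
  show ?thesis unfolding Gain_def
    using a b c d fin_G card_G1[OF assms] card_G3 card_G5 card_G7 card_G10
    by (simp add: card_Un_disjoint)
qed

end


context G begin

lemma noC3: assumes "E a b" "E b c" "E c a" shows False
proof -
  have "a \<in> V" "b \<in> V" "c \<in> V" using EV assms by blast+
  then show False using noc assms unfolding no_C3_C4_def by blast
qed
lemma noC4: assumes "E a b" "E b c" "E c d" "E d a" "distinct [a, b, c, d]" shows False
proof -
  have "a \<in> V" "b \<in> V" "c \<in> V" "d \<in> V" using EV assms by blast+
  then show False using noc assms unfolding no_C3_C4_def by blast
qed

lemma Esym_iff: "E x y \<longleftrightarrow> E y x" using Esym by blast

lemma Q_P: "w \<in> Q v \<longleftrightarrow> v \<in> P w"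
proof -
  have "w \<in> Q v \<longleftrightarrow> w \<in> V \<and> E v w \<and> before vs v w" unfolding Q_def by simp
  also have "\<dots> \<longleftrightarrow> v \<in> V \<and> E w v \<and> before vs v w" using EV Esym_iff by blast
  also have "\<dots> \<longleftrightarrow> v \<in> P w" unfolding P_def by simp
  finally show ?thesis .
qed
lemma memP: "w \<in> P v \<Longrightarrow> w \<in> V \<and> v \<in> V \<and> E v w \<and> E w v \<and> before vs w v"
  unfolding P_def using Esym_iff EV by blast
lemma memQ: "w \<in> Q v \<Longrightarrow> w \<in> V \<and> v \<in> V \<and> E v w \<and> E w v \<and> before vs v w"
  unfolding Q_def using Esym_iff EV by blast

lemma Iso_indep: "U \<subseteq> V \<Longrightarrow> independent_set V E (Iso U)"
  unfolding independent_set_def Iso_def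
proof (intro conjI ballI)
  assume "U \<subseteq> V"
  then show "{v \<in> U. P v \<inter> U = {} \<and> Q v \<inter> U = {}} \<subseteq> V" by auto
next
  fix x y assume x: "x \<in> {v \<in> U. P v \<inter> U = {} \<and> Q v \<inter> U = {}}" and y: "y \<in> {v \<in> U. P v \<inter> U = {} \<and> Q v \<inter> U = {}}"
  show "\<not> E x y"
  proof
    assume e: "E x y"
    then have "x \<noteq> y" using Eirr by auto
    then have "before vs x y \<or> before vs y x" using before_total EV e by blast
    then have "y \<in> P x \<or> y \<in> Q x" unfolding P_def Q_def using e EV by auto
    then show False using x y by auto
  qed
qed

lemma double_count: "finite U \<Longrightarrow> (\<Sum>v\<in>U. card (Q v \<inter> U)) = (\<Sum>v\<in>U. card (P v \<inter> U))"
proof -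
  assume fU: "finite U"
  have "(\<Sum>v\<in>U. card (Q v \<inter> U)) = card (Sigma U (\<lambda>v. Q v \<inter> U))"
    using fU by simp
  also have "Sigma U (\<lambda>v. Q v \<inter> U) = prod.swap ` Sigma U (\<lambda>v. P v \<inter> U)"
    using Q_P by force
  also have "card \<dots> = card (Sigma U (\<lambda>v. P v \<inter> U))"
    by (rule card_image) (simp add: inj_on_def)
  also have "\<dots> = (\<Sum>v\<in>U. card (P v \<inter> U))"
    using fU by simp
  finally show ?thesis .
qed

lemma arith_noniso: "(g::int) = 16 - c + 16 * qi + 4 * qo + 4 * po \<Longrightarrow> c = 5 + 3 * (p + q) + m \<Longrightarrow>
  m \<le> 2 \<Longrightarrow> l = 12 + p + qo \<Longrightarrow> p = pi + po \<Longrightarrow> q = qi + qo \<Longrightarrow> 1 \<le> pi + qi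
  \<Longrightarrow> 0 \<le> pi \<Longrightarrow> 0 \<le> qi \<Longrightarrow> 0 \<le> g - l - 8 * qi + 8 * pi"
  by simp

lemma arith_iso: "(g::int) = 16 - c + 4 * qo + 4 * po + m \<Longrightarrow> c = 5 + 3 * (p + q) + m \<Longrightarrow>
  l = 12 + p + qo \<Longrightarrow> p = pi + po \<Longrightarrow> q = qi + qo \<Longrightarrow> pi = 0 \<Longrightarrow> qi = 0
  \<Longrightarrow> -1 \<le> g - l - 8 * qi + 8 * pi"
  by simp

lemma vertex_bound:
  assumes v: "v \<in> U" and UV: "U \<subseteq> V"
  shows "int (card (Gain U v)) - int (card (Lost U v)) - 8 * int (card (Q v \<inter> U)) + 8 * int (card (P v \<inter> U))
         \<ge> (if v \<in> Iso U then -1 else 0)"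
proof -
  have vV: "v \<in> V" using v UV by auto
  define p where "p = card (P v)"
  define q where "q = card (Q v)"
  define pi where "pi = card (P v \<inter> U)"
  define po where "po = card (P v - U)"
  define qi where "qi = card (Q v \<inter> U)"
  define qo where "qo = card (Q v - U)"
  have pp: "p = pi + po" unfolding p_def pi_def po_def by (rule card_Int_Diff) simp
  have qq: "q = qi + qo" unfolding q_def qi_def qo_def by (rule card_Int_Diff) simp
  have cf: "card (X v) = 5 + 3 * (p + q) + p * q" using cform[OF vV] p_def q_def by simp
  have pq2: "p * q \<le> 2" using pq_le2[OF vV] p_def q_def by simp
  have cl: "card (Lost U v) = 12 + p + qo" using card_Lost p_def qo_def by simp
  have cg: "card (Gain U v) = (16 - card (X v)) + 16 * qi + 4 * qo + 4 * po + (if v \<in> Iso U then p * q else 0)"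
    using card_Gain[OF vV] p_def q_def qi_def qo_def po_def by simp
  have c16: "card (X v) \<le> 16" using cf pq2 cform[OF vV] p_def q_def by auto
  have ec: "int (card (X v)) = 5 + 3 * (int p + int q) + int (p * q)" using cf by simp
  have el: "int (card (Lost U v)) = 12 + int p + int qo" using cl by simp
  have ep: "int p = int pi + int po" using pp by simp
  have eq: "int q = int qi + int qo" using qq by simp
  show ?thesis
  proof (cases "v \<in> Iso U")
    case True
    then have z: "pi = 0" "qi = 0" unfolding Iso_def pi_def qi_def by auto
    have eg: "int (card (Gain U v)) = 16 - int (card (X v)) + 4 * int qo + 4 * int po + int (p * q)"
      using cg c16 True z by (simp add: of_nat_diff)
    have "-1 \<le> int (card (Gain U v)) - int (card (Lost U v)) - 8 * int qi + 8 * int pi"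
      by (rule arith_iso[OF eg ec el ep eq]) (use z in simp_all)
    then show ?thesis unfolding if_P[OF True] pi_def qi_def .
  next
    case False
    then have "P v \<inter> U \<noteq> {} \<or> Q v \<inter> U \<noteq> {}" using v unfolding Iso_def by auto
    then have "pi + qi \<ge> 1" unfolding pi_def qi_def
      by (metis One_nat_def Suc_leI add_gr_0 card_gt_0_iff finP finQ finite_Int)
    then have i1: "1 \<le> int pi + int qi" by linarith
    have eg: "int (card (Gain U v)) = 16 - int (card (X v)) + 16 * int qi + 4 * int qo + 4 * int po"
      using cg c16 False by (simp add: of_nat_diff)
    have m2: "int (p * q) \<le> 2" using pq2 by linarith
    have "0 \<le> int (card (Gain U v)) - int (card (Lost U v)) - 8 * int qi + 8 * int pi"
      by (rule arith_noniso[OF eg ec m2 el ep eq i1 of_nat_0_le_iff of_nat_0_le_iff])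
    then show ?thesis unfolding if_not_P[OF False] pi_def qi_def .
  qed
qed

end


context G begin

lemma C4_lemma: "a \<in> P v \<Longrightarrow> a \<in> P v' \<Longrightarrow> b \<in> Q v \<Longrightarrow> b \<in> Q v' \<Longrightarrow> v \<noteq> v' \<Longrightarrow> False"
proof -
  assume a: "a \<in> P v" "a \<in> P v'" "b \<in> Q v" "b \<in> Q v'" "v \<noteq> v'"
  have m: "E v a" "E a v" "E v' a" "E v b" "E b v'" "before vs a v" "before vs v b"
    using memP[OF a(1)] memP[OF a(2)] memQ[OF a(3)] memQ[OF a(4)] by auto
  have "a \<noteq> b" using before_idx[OF m(6)] before_idx[OF m(7)] by auto
  moreover have "a \<noteq> v" "a \<noteq> v'" "b \<noteq> v" "b \<noteq> v'" using P_ne Q_ne a by auto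
  ultimately have "distinct [a, v, b, v']" using a(5) by auto
  then show False using noC4[of a v b v'] m by blast
qed

lemma Gain_disj: "v \<noteq> v' \<Longrightarrow> Gain U v \<inter> Gain U v' = {}"
  unfolding Gain_def G1s_def G3s_def G5s_def G7s_def G10s_def
  by (auto dest: C4_lemma)

lemma Gain_notA: "v \<in> V \<Longrightarrow> Gain U v \<inter> Arcs = {}"
proof -
  assume vV: "v \<in> V"
  have "x \<notin> Arcs" if x: "x \<in> Gain U v" for x
  proof -
    have "x \<in> G1s v \<or> x \<in> G3s U v \<or> x \<in> G5s U v \<or> x \<in> G7s U v \<or> x \<in> G10s U v"
      using x unfolding Gain_def by blast
    then show ?thesis
    proof (elim disjE)
      assume "x \<in> G1s v" then show ?thesis unfolding G1s_def by auto
    next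
      assume "x \<in> G3s U v" then show ?thesis unfolding G3s_def by (auto dest: Q_ne)
    next
      assume "x \<in> G5s U v" then show ?thesis unfolding G5s_def by (auto dest: Q_ne)
    next
      assume "x \<in> G7s U v" then show ?thesis unfolding G7s_def by (auto dest: P_ne)
    next
      assume "x \<in> G10s U v"
      then obtain a b where ab: "a \<in> P v" "b \<in> Q v" "x = (Uv a, Uv b)"
        unfolding G10s_def by (auto split: if_splits)
      show ?thesis
      proof
        assume "x \<in> Arcs"
        then have "E a b" using ab by simp
        moreover have "E b v" "E v a" using memP[OF ab(1)] memQ[OF ab(2)] by auto
        ultimately show False using noC3 by blast
      qed
    qed
  qed
  then show ?thesis by blast
qed

end


context G begin

lemma LB:
  assumes es: "elimination_sequence (internal vs) \<sigma>"
  shows "\<exists>S. independent_set V E S \<and> card Arcs \<le> card (eliminate_seq Arcs \<sigma>) + card S"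
proof -
  define U where "U = {v \<in> V. Uv v \<in> set \<sigma>}"
  have d\<sigma>: "distinct \<sigma>" using es unfolding elimination_sequence_def by simp
  have s\<sigma>: "set \<sigma> = Uv ` U" using es unfolding elimination_sequence_def internal_def U_def by auto
  have UV: "U \<subseteq> V" unfolding U_def by auto
  have fU: "finite U" using UV finite_subset by blast
  define B where "B = eliminate_seq Arcs \<sigma>"
  have fB: "finite B" unfolding B_def by (rule fin_elim)
  have nI[simp]: "Inn v j \<notin> set \<sigma>" for v j using s\<sigma> by auto
  have nO[simp]: "Outn v j \<notin> set \<sigma>" for v j using s\<sigma> by auto
  have nT[simp]: "Tn t \<notin> set \<sigma>" for t using s\<sigma> by auto
  have nU[simp]: "Uv w \<in> set \<sigma> \<longleftrightarrow> w \<in> U" for w using s\<sigma> by auto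
  have p2: "(x, y) \<in> B" if "(x, a) \<in> Arcs" "(a, y) \<in> Arcs" "a \<in> set \<sigma>" "x \<notin> set \<sigma>" "y \<notin> set \<sigma>" for x a y
    unfolding B_def using path2[OF acycA d\<sigma>] that by blast
  have p3: "(x, y) \<in> B" if "(x, a) \<in> Arcs" "(a, b) \<in> Arcs" "(b, y) \<in> Arcs" "a \<in> set \<sigma>" "b \<in> set \<sigma>"
    "x \<notin> set \<sigma>" "y \<notin> set \<sigma>" for x a b y
    unfolding B_def using path3[OF acycA d\<sigma>] that by blast

  have lost: "Arcs - B \<subseteq> (\<Union>v\<in>U. Lost U v)"
  proof
    fix e assume e: "e \<in> Arcs - B"
    obtain a b where ab: "e = (a, b)" by (cases e)
    have eA: "(a, b) \<in> Arcs" and eB: "(a, b) \<notin> B" using e ab by auto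
    have "a \<in> set \<sigma> \<or> b \<in> set \<sigma>"
      using survive[OF acycA d\<sigma> eA] eB unfolding B_def by blast
    then show "e \<in> (\<Union>v\<in>U. Lost U v)"
    proof
      assume "a \<in> set \<sigma>"
      then obtain v where v: "v \<in> U" "a = Uv v" using s\<sigma> by auto
      have "(Uv v, b) \<in> Arcs" using eA v by simp
      then have "v \<in> V \<and> ((\<exists>j<4. b = Outn v j) \<or> (\<exists>t<4. b = Tn t) \<or> (\<exists>w\<in>Q v. b = Uv w))"
        using out_Uv by blast
      then consider (o) j where "j < 4" "b = Outn v j" | (t) t where "t < 4" "b = Tn t"
        | (u) w where "w \<in> Q v" "b = Uv w" by blast
      then show ?thesis
      proof cases
        case o
        then have "e \<in> Lost U v" unfolding ab v Lost_def by auto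
        then show ?thesis using v by blast
      next
        case t
        then have "e \<in> Lost U v" unfolding ab v Lost_def by auto
        then show ?thesis using v by blast
      next
        case u
        note w = u
        show ?thesis
        proof (cases "w \<in> U")
          case True
          have "v \<in> P w" using w Q_P by blast
          then have "e \<in> Lost U w" unfolding ab v w Lost_def by auto
          then show ?thesis using True by blast
        next
          case False
          then have "e \<in> Lost U v" unfolding ab v w Lost_def using w by auto
          then show ?thesis using v by blast
        qed
      qed
    next
      assume "b \<in> set \<sigma>"
      then obtain v where v: "v \<in> U" "b = Uv v" using s\<sigma> by auto
      have "(a, Uv v) \<in> Arcs" using eA v by simp
      then have "v \<in> V \<and> ((\<exists>j<4. a = Inn v j) \<or> (\<exists>w\<in>P v. a = Uv w))"
        using in_Uv by blast
      then have "e \<in> Lost U v" unfolding ab v Lost_def by auto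
      then show ?thesis using v by blast
    qed
  qed

  have gainB: "Gain U v \<subseteq> B" if vU: "v \<in> U" for v
  proof
    have vV: "v \<in> V" using vU UV by auto
    fix x assume x: "x \<in> Gain U v"
    have "x \<in> G1s v \<or> x \<in> G3s U v \<or> x \<in> G5s U v \<or> x \<in> G7s U v \<or> x \<in> G10s U v"
      using x unfolding Gain_def by blast
    then show "x \<in> B"
    proof (elim disjE)
      assume "x \<in> G1s v"
      then obtain a b where "x = (Inn v a, Outn v b)" "a < 4" "b < 4" unfolding G1s_def by auto
      then show ?thesis using p2[of "Inn v a" "Uv v" "Outn v b"] vV vU by simp
    next
      assume "x \<in> G3s U v"
      then obtain w a b where "x = (Inn v a, Outn w b)" "a < 4" "b < 4" "w \<in> Q v" "w \<in> U"
        unfolding G3s_def by auto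
      then show ?thesis using p3[of "Inn v a" "Uv v" "Uv w" "Outn w b"] vV vU memQ by simp
    next
      assume "x \<in> G5s U v"
      then obtain w j where "x = (Inn v j, Uv w)" "j < 4" "w \<in> Q v" "w \<notin> U"
        unfolding G5s_def by auto
      then show ?thesis using p2[of "Inn v j" "Uv v" "Uv w"] vV vU memQ by simp
    next
      assume "x \<in> G7s U v"
      then obtain w j where "x = (Uv w, Outn v j)" "j < 4" "w \<in> P v" "w \<notin> U"
        unfolding G7s_def by auto
      then show ?thesis using p2[of "Uv w" "Uv v" "Outn v j"] vV vU memP by simp
    next
      assume "x \<in> G10s U v"
      then obtain a b where ab: "x = (Uv a, Uv b)" "a \<in> P v" "b \<in> Q v" "v \<in> Iso U"
        unfolding G10s_def by (auto split: if_splits)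
      then have "a \<notin> U" "b \<notin> U" unfolding Iso_def by auto
      then show ?thesis using p2[of "Uv a" "Uv v" "Uv b"] ab vV vU memQ memP by simp
    qed
  qed

  have cardG: "card (\<Union>v\<in>U. Gain U v) = (\<Sum>v\<in>U. card (Gain U v))"
    by (rule card_UN_disjoint[OF fU]) (auto simp: finGain dest: Gain_disj)
  have GA: "(\<Union>v\<in>U. Gain U v) \<inter> (Arcs \<inter> B) = {}" using Gain_notA UV by blast
  have sub: "(Arcs \<inter> B) \<union> (\<Union>v\<in>U. Gain U v) \<subseteq> B" using gainB by blast
  have "card (Arcs \<inter> B) + card (\<Union>v\<in>U. Gain U v) = card ((Arcs \<inter> B) \<union> (\<Union>v\<in>U. Gain U v))"
    using GA fB finGain fU by (subst card_Un_disjoint) auto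
  also have "\<dots> \<le> card B" using card_mono[OF fB sub] .
  finally have c1: "card (Arcs \<inter> B) + (\<Sum>v\<in>U. card (Gain U v)) \<le> card B" using cardG by simp
  have c2: "card Arcs = card (Arcs \<inter> B) + card (Arcs - B)" using finA by (rule card_Int_Diff)
  have "card (Arcs - B) \<le> card (\<Union>v\<in>U. Lost U v)"
    using lost by (rule card_mono[rotated]) (simp add: fU finLost)
  also have "\<dots> \<le> (\<Sum>v\<in>U. card (Lost U v))" by (rule card_UN_le[OF fU])
  finally have c3: "card (Arcs - B) \<le> (\<Sum>v\<in>U. card (Lost U v))" .

  have vb: "(\<Sum>v\<in>U. int (card (Gain U v)) - int (card (Lost U v)) - 8 * int (card (Q v \<inter> U)) + 8 * int (card (P v \<inter> U)))
     \<ge> (\<Sum>v\<in>U. (if v \<in> Iso U then -1 else 0))"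
    by (rule sum_mono) (rule vertex_bound[OF _ UV])
  have "(\<Sum>v\<in>U. (if v \<in> Iso U then -1 else (0::int))) = - int (card (Iso U))"
  proof -
    have "Iso U \<subseteq> U" unfolding Iso_def by auto
    then have "U \<inter> {x. x \<in> Iso U} = Iso U" by auto
    then show ?thesis using fU by (simp add: sum.If_cases)
  qed
  moreover have "(\<Sum>v\<in>U. int (card (Gain U v)) - int (card (Lost U v)) - 8 * int (card (Q v \<inter> U)) + 8 * int (card (P v \<inter> U)))
      = (\<Sum>v\<in>U. int (card (Gain U v))) - (\<Sum>v\<in>U. int (card (Lost U v)))
        - 8 * int (\<Sum>v\<in>U. card (Q v \<inter> U)) + 8 * int (\<Sum>v\<in>U. card (P v \<inter> U))"
    by (simp add: sum.distrib sum_subtractf sum_distrib_left)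
  moreover have "(\<Sum>v\<in>U. card (Q v \<inter> U)) = (\<Sum>v\<in>U. card (P v \<inter> U))" by (rule double_count[OF fU])
  ultimately have "int (\<Sum>v\<in>U. card (Gain U v)) - int (\<Sum>v\<in>U. card (Lost U v)) \<ge> - int (card (Iso U))"
    using vb by simp
  then have "card Arcs \<le> card B + card (Iso U)" using c1 c2 c3 by linarith
  then show ?thesis using Iso_indep[OF UV] unfolding B_def by blast
qed

end


context G begin

lemma indep_PQ: "independent_set V E S \<Longrightarrow> v \<in> S \<Longrightarrow> P v \<inter> S = {} \<and> Q v \<inter> S = {}"
  unfolding independent_set_def P_def Q_def by blast

lemma arith_eq: "(g::int) = 16 - c + 4 * q + 4 * p + m \<Longrightarrow> c = 5 + 3 * (p + q) + m \<Longrightarrow>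
  l = 12 + p + q \<Longrightarrow> g - l = -1"
  by simp

lemma vertex_eq:
  assumes S: "independent_set V E S" and v: "v \<in> S"
  shows "int (card (Gain S v)) - int (card (Lost S v)) = -1"
proof -
  have vV: "v \<in> V" using S v unfolding independent_set_def by auto
  have d: "P v \<inter> S = {}" "Q v \<inter> S = {}" using indep_PQ[OF S v] by auto
  then have iso: "v \<in> Iso S" unfolding Iso_def using v by auto
  have PS: "P v - S = P v" "Q v - S = Q v" using d by auto
  define p where "p = card (P v)"
  define q where "q = card (Q v)"
  have cf: "card (X v) = 5 + 3 * (p + q) + p * q" using cform[OF vV] p_def q_def by simp
  have pq2: "p * q \<le> 2" using pq_le2[OF vV] p_def q_def by simp
  have c16: "card (X v) \<le> 16" using cf pq2 cform[OF vV] p_def q_def by auto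
  have cl: "int (card (Lost S v)) = 12 + int p + int q" using card_Lost[of S v] PS p_def q_def by simp
  have cg: "int (card (Gain S v)) = 16 - int (card (X v)) + 4 * int q + 4 * int p + int (p * q)"
    using card_Gain[OF vV, of S] PS d iso c16 p_def q_def by (simp add: of_nat_diff)
  have ec: "int (card (X v)) = 5 + 3 * (int p + int q) + int (p * q)" using cf by simp
  show ?thesis by (rule arith_eq[OF cg ec cl])
qed

lemma UB:
  assumes S: "independent_set V E S"
  shows "\<exists>\<sigma>. elimination_sequence (internal vs) \<sigma> \<and> card (eliminate_seq Arcs \<sigma>) + card S \<le> card Arcs"
proof -
  have SV: "S \<subseteq> V" using S unfolding independent_set_def by auto
  have fS: "finite S" using SV finite_subset by blast
  have Sind: "\<And>x y. x \<in> S \<Longrightarrow> y \<in> S \<Longrightarrow> \<not> E x y" using S unfolding independent_set_def by auto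
  define \<sigma> where "\<sigma> = map Uv (filter (\<lambda>v. v \<in> S) vs)"
  have s\<sigma>: "set \<sigma> = Uv ` S" unfolding \<sigma>_def using SV by auto
  have d\<sigma>: "distinct \<sigma>" unfolding \<sigma>_def using dist by (simp add: distinct_map inj_on_def)
  have es: "elimination_sequence (internal vs) \<sigma>"
    unfolding elimination_sequence_def internal_def using d\<sigma> s\<sigma> SV by auto
  have ia: "indep_arcs Arcs (set \<sigma>)"
    unfolding indep_arcs_def s\<sigma>
  proof (intro allI impI notI)
    fix a b assume "(a, b) \<in> Arcs" "a \<in> Uv ` S \<and> b \<in> Uv ` S"
    then show False using Sind by auto
  qed
  define B where "B = eliminate_seq Arcs \<sigma>"
  have fB: "finite B" unfolding B_def by (rule fin_elim)
  have BE: "B \<subseteq> E2 Arcs (Uv ` S)" unfolding B_def using elim_indep[OF d\<sigma> ia] s\<sigma> by simp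
  define Touch where "Touch = (\<Union>v\<in>S. Lost S v)"
  have lost_uv: "fst e = Uv v \<or> snd e = Uv v" if "e \<in> Lost S v" for e v
    using that unfolding Lost_def by auto
  have TA: "Touch \<subseteq> Arcs"
  proof
    fix e assume "e \<in> Touch"
    then obtain v where v: "v \<in> S" "e \<in> Lost S v" unfolding Touch_def by auto
    have vV: "v \<in> V" using v SV by auto
    show "e \<in> Arcs" using v(2) vV unfolding Lost_def by (auto dest: memP memQ)
  qed
  have Ldisj: "Lost S v \<inter> Lost S v' = {}" if "v \<in> S" "v' \<in> S" "v \<noteq> v'" for v v'
  proof -
    have "P v \<inter> S = {}" "Q v \<inter> S = {}" "P v' \<inter> S = {}" "Q v' \<inter> S = {}"
      using indep_PQ[OF S] that by auto
    then show ?thesis unfolding Lost_def using that by auto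
  qed
  have cT: "card Touch = (\<Sum>v\<in>S. card (Lost S v))"
    unfolding Touch_def by (rule card_UN_disjoint[OF fS]) (auto simp: finLost dest: Ldisj)
  have BT: "B \<subseteq> (Arcs - Touch) \<union> (\<Union>v\<in>S. Gain S v)"
  proof
    fix e assume "e \<in> B"
    then have eE: "e \<in> E2 Arcs (Uv ` S)" using BE by auto
    obtain x y where e: "e = (x, y)" by (cases e)
    have notT: "(x, y) \<notin> Touch" if "x \<notin> Uv ` S" "y \<notin> Uv ` S"
    proof
      assume "(x, y) \<in> Touch"
      then obtain v where "v \<in> S" "(x, y) \<in> Lost S v" unfolding Touch_def by auto
      then show False using lost_uv[of "(x, y)" v] that by auto
    qed
    show "e \<in> (Arcs - Touch) \<union> (\<Union>v\<in>S. Gain S v)"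
    proof (cases "(x, y) \<in> Arcs \<and> x \<notin> Uv ` S \<and> y \<notin> Uv ` S")
      case True
      then show ?thesis using notT e by auto
    next
      case False
      then obtain s where s: "s \<in> S" "(x, Uv s) \<in> Arcs" "(Uv s, y) \<in> Arcs"
        using eE e unfolding E2_def by auto
      have sV: "s \<in> V" using s SV by auto
      have ds: "P s \<inter> S = {}" "Q s \<inter> S = {}" using indep_PQ[OF S s(1)] by auto
      then have iso: "s \<in> Iso S" unfolding Iso_def using s by auto
      have xc: "(\<exists>j<4. x = Inn s j) \<or> (\<exists>w\<in>P s. x = Uv w)" using s(2) in_Uv by blast
      have yc: "(\<exists>j<4. y = Outn s j) \<or> (\<exists>t<4. y = Tn t) \<or> (\<exists>w\<in>Q s. y = Uv w)"
        using s(3) out_Uv by blast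
      have xS: "x \<notin> Uv ` S" using xc ds by auto
      have yS: "y \<notin> Uv ` S" using yc ds by auto
      show ?thesis
      proof (cases "(x, y) \<in> Arcs")
        case True
        then show ?thesis using notT[OF xS yS] e by auto
      next
        case nA: False
        have "(x, y) \<in> Gain S s"
          using xc yc
        proof (elim disjE exE bexE conjE)
          fix j j' assume "j < 4" "x = Inn s j" "j' < 4" "y = Outn s j'"
          then show ?thesis using nA sV unfolding Gain_def G1s_def by auto
        next
          fix j t assume "j < 4" "x = Inn s j" "t < 4" "y = Tn t"
          then show ?thesis using nA sV by auto
        next
          fix j w assume "j < 4" "x = Inn s j" "w \<in> Q s" "y = Uv w"
          then show ?thesis using ds unfolding Gain_def G5s_def by auto
        next
          fix w j' assume "w \<in> P s" "x = Uv w" "j' < 4" "y = Outn s j'"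
          then show ?thesis using ds unfolding Gain_def G7s_def by auto
        next
          fix w t assume "w \<in> P s" "x = Uv w" "t < 4" "y = Tn t"
          then show ?thesis using nA memP by auto
        next
          fix w w' assume "w \<in> P s" "x = Uv w" "w' \<in> Q s" "y = Uv w'"
          then show ?thesis using iso unfolding Gain_def G10s_def by auto
        qed
        then show ?thesis using s(1) e by auto
      qed
    qed
  qed
  have "card B \<le> card ((Arcs - Touch) \<union> (\<Union>v\<in>S. Gain S v))"
    by (rule card_mono[OF _ BT]) (simp add: finA fS finGain)
  also have "\<dots> \<le> card (Arcs - Touch) + card (\<Union>v\<in>S. Gain S v)" by (rule card_Un_le)
  also have "\<dots> \<le> card (Arcs - Touch) + (\<Sum>v\<in>S. card (Gain S v))"
    using card_UN_le[OF fS] by simp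
  finally have c1: "card B \<le> card (Arcs - Touch) + (\<Sum>v\<in>S. card (Gain S v))" .
  have c2: "card (Arcs - Touch) = card Arcs - card Touch"
    by (rule card_Diff_subset[OF finite_subset[OF TA finA] TA])
  have c3: "card Touch \<le> card Arcs" by (rule card_mono[OF finA TA])
  have "(\<Sum>v\<in>S. int (card (Gain S v)) - int (card (Lost S v))) = (\<Sum>v\<in>S. -1)"
    by (rule sum.cong) (auto intro: vertex_eq[OF S])
  then have "int (\<Sum>v\<in>S. card (Gain S v)) - int (\<Sum>v\<in>S. card (Lost S v)) = - int (card S)"
    by (simp add: sum_subtractf)
  then have "card B + card S \<le> card Arcs" using c1 c2 c3 cT by linarith
  then show ?thesis using es unfolding B_def by blast
qed

end


theorem mainTheorem6:
  fixes vs :: "'v list" and E :: "'v \<Rightarrow> 'v \<Rightarrow> bool" and X :: "'v \<Rightarrow> (nat \<times> nat) set"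
  assumes "distinct vs"
    and "ugraph (set vs) E"
    and "\<forall>v \<in> set vs. deg (set vs) E v = 2 \<or> deg (set vs) E v = 3"
    and "no_C3_C4 (set vs) E"
    and "\<forall>v \<in> set vs. X v \<subseteq> {0..<4} \<times> {0..<4} \<and> card (X v) = gadget_arcs vs E v"
  shows "(\<forall>k::nat. (\<exists>S. independent_set (set vs) E S \<and> card S \<ge> k) \<longleftrightarrow>
            (\<exists>\<sigma>. elimination_sequence (internal vs) \<sigma> \<and>
                 int (card (eliminate_seq (dag_arcs vs E X) \<sigma>)) \<le> int (card (dag_arcs vs E X)) - int k))
       \<and> Min {card (eliminate_seq (dag_arcs vs E X) \<sigma>) | \<sigma>. elimination_sequence (internal vs) \<sigma>}
           = card (dag_arcs vs E X) - independence_number (set vs) E"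
proof -
  interpret G vs E X using assms by unfold_locales
  have part1: "(\<exists>S. independent_set V E S \<and> card S \<ge> k) \<longleftrightarrow>
            (\<exists>\<sigma>. elimination_sequence (internal vs) \<sigma> \<and>
                 int (card (eliminate_seq Arcs \<sigma>)) \<le> int (card Arcs) - int k)" for k
  proof
    assume "\<exists>S. independent_set V E S \<and> card S \<ge> k"
    then obtain S where S: "independent_set V E S" "card S \<ge> k" by blast
    obtain \<sigma> where "elimination_sequence (internal vs) \<sigma>" "card (eliminate_seq Arcs \<sigma>) + card S \<le> card Arcs"
      using UB[OF S(1)] by blast
    then show "\<exists>\<sigma>. elimination_sequence (internal vs) \<sigma> \<and>
                 int (card (eliminate_seq Arcs \<sigma>)) \<le> int (card Arcs) - int k"
      using S(2) by (intro exI[of _ \<sigma>]) auto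
  next
    assume "\<exists>\<sigma>. elimination_sequence (internal vs) \<sigma> \<and>
                 int (card (eliminate_seq Arcs \<sigma>)) \<le> int (card Arcs) - int k"
    then obtain \<sigma> where s: "elimination_sequence (internal vs) \<sigma>"
      "int (card (eliminate_seq Arcs \<sigma>)) \<le> int (card Arcs) - int k" by blast
    obtain S where "independent_set V E S" "card Arcs \<le> card (eliminate_seq Arcs \<sigma>) + card S"
      using LB[OF s(1)] by blast
    then show "\<exists>S. independent_set V E S \<and> card S \<ge> k" using s(2) by (intro exI[of _ S]) auto
  qed
  define M where "M = {card (eliminate_seq Arcs \<sigma>) | \<sigma>. elimination_sequence (internal vs) \<sigma>}"
  define I where "I = {card S | S. independent_set V E S}"
  have fM: "finite M"
  proof (rule finite_subset)
    show "M \<subseteq> {..card (Nodes \<times> Nodes)}"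
      unfolding M_def using card_mono[OF finite_cartesian_product[OF finNodes finNodes] elim_sub_nodes[OF A_Nodes]]
      by auto
  qed simp
  have "elimination_sequence (internal vs) []" unfolding elimination_sequence_def by simp
  then have neM: "M \<noteq> {}" unfolding M_def by blast
  have fI: "finite I"
  proof (rule finite_subset)
    show "I \<subseteq> {..card V}"
      unfolding I_def independent_set_def by (auto intro!: card_mono)
  qed simp
  have neI: "I \<noteq> {}" unfolding I_def independent_set_def by auto
  have alpha: "independence_number V E = Max I" unfolding independence_number_def I_def by simp
  obtain S0 where S0: "independent_set V E S0" "card S0 = Max I"
    using Max_in[OF fI neI] unfolding I_def by auto
  obtain \<sigma>0 where \<sigma>0: "elimination_sequence (internal vs) \<sigma>0" "card (eliminate_seq Arcs \<sigma>0) + card S0 \<le> card Arcs"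
    using UB[OF S0(1)] by blast
  have le1: "Min M \<le> card Arcs - Max I"
  proof -
    have "card (eliminate_seq Arcs \<sigma>0) \<in> M" unfolding M_def using \<sigma>0(1) by blast
    then have "Min M \<le> card (eliminate_seq Arcs \<sigma>0)" using Min_le[OF fM] by blast
    then show ?thesis using \<sigma>0(2) S0(2) by linarith
  qed
  have le2: "card Arcs - Max I \<le> Min M"
  proof -
    have "Min M \<in> M" using Min_in[OF fM neM] .
    then obtain \<sigma> where s: "elimination_sequence (internal vs) \<sigma>" "Min M = card (eliminate_seq Arcs \<sigma>)"
      unfolding M_def by blast
    obtain S where S: "independent_set V E S" "card Arcs \<le> card (eliminate_seq Arcs \<sigma>) + card S"
      using LB[OF s(1)] by blast
    have "card S \<in> I" unfolding I_def using S(1) by blast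
    then have "card S \<le> Max I" using Max_ge[OF fI] by blast
    then show ?thesis using S(2) s(2) by linarith
  qed
  show ?thesis using part1 le1 le2 alpha unfolding M_def by simp
qed

end
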